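(* Let $\mathbf{A}$ be the constraint matrix of the relaxed nonbinary LDPC decoding problem constructed in the context. Then every entry of $\mathbf{A}$ belongs to $\{0,1,-1\}$.
   Context: Fix $q\ge1$; identify $\mathbb{F}_{2^q}$ with $\{0,\dots,2^q-1\}$ via binary expansion $\alpha=\sum_{i=1}^q c_i2^{i-1}$. A nonbinary code has parity-check matrix $\mathbf{H}\in\mathbb{F}_{2^q}^{m\times n}$ whose $j$th row has $d_j\ge3$ nonzero entries, at positions $\sigma_1,\dots,\sigma_{d_j}$ with coefficients $h_{\sigma_1},\dots,h_{\sigma_{d_j}}$. Each row is decomposed into $d_j-2$ three-variable checks using $d_j-3$ auxiliary symbols $g_1,\dots,g_{d_j-3}$: the first check involves $(u_{\sigma_1},h_{\sigma_1}),(u_{\sigma_2},h_{\sigma_2}),(g_1,1)$; for $t=2,\dots,d_j-3$ a check involves $(g_{t-1},1),(u_{\sigma_{t+1}},h_{\sigma_{t+1}}),(g_t,1)$; the last check involves $(g_{d_j-3},1),(u_{\sigma_{d_j-1}},h_{\sigma_{d_j-1}}),(u_{\sigma_{d_j}},h_{\sigma_{d_j}})$ (if $d_j=3$ there is a single check on the three code symbols). Altogether there are $\Gamma_c=\sum_j(d_j-2)$ three-variable checks and $\Gamma_a=\sum_j(d_j-3)$ auxiliary symbols, so $n+\Gamma_a$ symbols. For check $\tau$ let $h_{\tau,1},h_{\tau,2},h_{\tau,3}$ be its coefficients and $\mathbf{Q}_\tau\in\{0,1\}^{3\times(n+\Gamma_a)}$ the matrix whose $k$th row has a single $1$ at the index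 of its $k$th symbol. Let $\mathbf{D}(2^q,h)$ be the $(2^q-1)\times(2^q-1)$ matrix with $D_{ij}=1$ iff $i=j\cdot h$ in $\mathbb{F}_{2^q}$, and $\mathbf{D}_\tau=\mathrm{diag}(\mathbf{D}(2^q,h_{\tau,1}),\mathbf{D}(2^q,h_{\tau,2}),\mathbf{D}(2^q,h_{\tau,3}))$. Let $\mathbf{B}\in\{0,1\}^{q\times(2^q-1)}$ have $B_{i\alpha}$ equal to the $i$th binary digit (weight $2^{i-1}$) of $\alpha$. For $\ell=1,\dots,2^q-1$ let $\boldsymbol\beta_\ell\in\{0,1\}^{2^q-1}$, $(\boldsymbol\beta_\ell)_\alpha=\big(\sum_{i=1}^qB_{i\ell}B_{i\alpha}\big)\bmod 2$. Let $\mathbf{P}=\begin{bmatrix}1&-1&-1\\-1&1&-1\\-1&-1&1\\1&1&1\end{bmatrix}$. Set $\hat{\mathbf{W}}_\tau=[\mathbf{P}\,\mathrm{diag}(\boldsymbol\beta_1^T,\boldsymbol\beta_1^T,\boldsymbol\beta_1^T)\mathbf{D}_\tau;\dots;\mathbf{P}\,\mathrm{diag}(\boldsymbol\beta_{2^q-1}^T,\boldsymbol\beta_{2^q-1}^T,\boldsymbol\beta_{2^q-1}^T)\mathbf{D}_\tau]$, $\mathbf{S}=\mathbf{I}_{n+\Gamma_a}\otimes\mathbf{1}_{2^q-1}^T$, and $\mathbf{A}=[\hat{\mathbf{W}}_1(\mathbf{Q}_1\otimes\mathbf{I}_{2^q-1});\dots;\hat{\mathbf{W}}_{\Gamma_c}(\mathbf{Q}_{\Gamma_c}\otimes\mathbf{I}_{2^q-1});\mathbf{S}]$,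 where semicolons denote vertical stacking. *)

theory Defs
  imports "Jordan_Normal_Form.Matrix"
begin

(* Integer matrices are Jordan_Normal_Form "int mat"; all indices are 0-based.
   Row/column r of a (2^q-1)-sized block corresponds to the field element
   with integer label r+1. *)

fun stack :: "int mat list \<Rightarrow> nat \<Rightarrow> int mat" where
  "stack [] nc = 0\<^sub>m 0 nc"
| "stack (M # Ms) nc = M @\<^sub>r stack Ms nc"

definition bdiag3 :: "int mat \<Rightarrow> int mat \<Rightarrow> int mat \<Rightarrow> int mat" where
  "bdiag3 X Y Z =
     four_block_mat X (0\<^sub>m (dim_row X) (dim_col Y + dim_col Z))
       (0\<^sub>m (dim_row Y + dim_row Z) (dim_col X))
       (four_block_mat Y (0\<^sub>m (dim_row Y) (dim_col Z)) (0\<^sub>m (dim_row Z) (dim_col Y)) Z)"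

definition kron :: "int mat \<Rightarrow> int mat \<Rightarrow> int mat" where
  "kron X Y = mat (dim_row X * dim_row Y) (dim_col X * dim_col Y)
     (\<lambda>(i, j). X $$ (i div dim_row Y, j div dim_col Y) * Y $$ (i mod dim_row Y, j mod dim_col Y))"

definition Dmat :: "nat \<Rightarrow> ('f::field \<Rightarrow> nat) \<Rightarrow> 'f \<Rightarrow> int mat" where
  "Dmat q enc h = mat (2^q - 1) (2^q - 1)
     (\<lambda>(r, c). if Suc r = enc (inv_into UNIV enc (Suc c) * h) then 1 else 0)"

definition Bmat :: "nat \<Rightarrow> int mat" where
  "Bmat q = mat q (2^q - 1) (\<lambda>(i, c). if bit (Suc c) i then 1 else 0)"

definition beta_row :: "nat \<Rightarrow> nat \<Rightarrow> int mat" where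
  "beta_row q l = mat 1 (2^q - 1)
     (\<lambda>(_, c). (\<Sum>i<q. Bmat q $$ (i, l - 1) * Bmat q $$ (i, c)) mod 2)"

definition Pmat :: "int mat" where
  "Pmat = mat_of_rows_list 3 [[1, -1, -1], [-1, 1, -1], [-1, -1, 1], [1, 1, 1]]"

definition nz_pos :: "'f::field mat \<Rightarrow> nat \<Rightarrow> nat list" where
  "nz_pos H j = sorted_list_of_set {k. k < dim_col H \<and> H $$ (j, k) \<noteq> 0}"

definition row_deg :: "'f::field mat \<Rightarrow> nat \<Rightarrow> nat" where
  "row_deg H j = length (nz_pos H j)"

(* checks of row j: each check is a list of three (symbol index, coefficient);
   auxiliary symbol g_t of this row has index n + base + (t-1) *)
definition row_checks :: "'f::field mat \<Rightarrow> nat \<Rightarrow> nat \<Rightarrow> (nat \<times> 'f) list list" where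
  "row_checks H j base =
    (let s = nz_pos H j; d = length s; n = dim_col H;
         u = (\<lambda>k. (s ! k, H $$ (j, s ! k)));
         g = (\<lambda>t. (n + base + (t - 1), 1))
     in if d = 3 then [[u 0, u 1, u 2]]
        else [[u 0, u 1, g 1]]
             @ map (\<lambda>t. [g (t - 1), u t, g t]) [2..<d - 2]
             @ [[g (d - 3), u (d - 2), u (d - 1)]])"

definition aux_base :: "'f::field mat \<Rightarrow> nat \<Rightarrow> nat" where
  "aux_base H j = (\<Sum>j'<j. row_deg H j' - 3)"

definition all_checks :: "'f::field mat \<Rightarrow> (nat \<times> 'f) list list" where
  "all_checks H = concat (map (\<lambda>j. row_checks H j (aux_base H j)) [0..<dim_row H])"

definition Gamma_a :: "'f::field mat \<Rightarrow> nat" where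
  "Gamma_a H = (\<Sum>j<dim_row H. row_deg H j - 3)"

definition num_syms :: "'f::field mat \<Rightarrow> nat" where
  "num_syms H = dim_col H + Gamma_a H"

definition Qmat :: "nat \<Rightarrow> (nat \<times> 'f) list \<Rightarrow> int mat" where
  "Qmat N ch = mat 3 N (\<lambda>(k, c). if c = fst (ch ! k) then 1 else 0)"

definition Dtau :: "nat \<Rightarrow> ('f::field \<Rightarrow> nat) \<Rightarrow> (nat \<times> 'f) list \<Rightarrow> int mat" where
  "Dtau q enc ch = bdiag3 (Dmat q enc (snd (ch ! 0))) (Dmat q enc (snd (ch ! 1))) (Dmat q enc (snd (ch ! 2)))"

definition What :: "nat \<Rightarrow> ('f::field \<Rightarrow> nat) \<Rightarrow> (nat \<times> 'f) list \<Rightarrow> int mat" where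
  "What q enc ch = stack
     (map (\<lambda>l. Pmat * bdiag3 (beta_row q l) (beta_row q l) (beta_row q l) * Dtau q enc ch)
          [1..<2^q])
     (3 * (2^q - 1))"

definition Smat :: "nat \<Rightarrow> nat \<Rightarrow> int mat" where
  "Smat q N = kron (1\<^sub>m N) (mat 1 (2^q - 1) (\<lambda>_. 1))"

definition Amat :: "nat \<Rightarrow> ('f::field \<Rightarrow> nat) \<Rightarrow> 'f mat \<Rightarrow> int mat" where
  "Amat q enc H =
    (let N = num_syms H
     in stack (map (\<lambda>ch. What q enc ch * kron (Qmat N ch) (1\<^sub>m (2^q - 1))) (all_checks H) @ [Smat q N])
              (N * (2^q - 1)))"

end

theory Submission
  imports Defs
begin

definition ent :: "int set \<Rightarrow> int mat \<Rightarrow> bool" where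
  "ent S M = (\<forall>i<dim_row M. \<forall>j<dim_col M. M $$ (i,j) \<in> S)"

definition col1 :: "int mat \<Rightarrow> bool" where
  "col1 M = (\<forall>j<dim_col M. \<forall>i1 i2. i1 < dim_row M \<longrightarrow> i2 < dim_row M \<longrightarrow>
      M $$ (i1,j) \<noteq> 0 \<longrightarrow> M $$ (i2,j) \<noteq> 0 \<longrightarrow> i1 = i2)"

lemma mult_entry:
  assumes "dim_col A = dim_row B" "i < dim_row A" "j < dim_col B"
  shows "(A * B) $$ (i,j) = (\<Sum>k<dim_row B. A $$ (i,k) * B $$ (k,j))"
proof -
  have "(A * B) $$ (i,j) = row A i \<bullet> col B j" using assms by simp
  also have "\<dots> = (\<Sum>k\<in>{0..<dim_row B}. row A i $ k * col B j $ k)" by (simp add: scalar_prod_def)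
  also have "\<dots> = (\<Sum>k<dim_row B. A $$ (i,k) * B $$ (k,j))"
    using assms by (auto simp: lessThan_atLeast0 intro!: sum.cong)
  finally show ?thesis .
qed

lemma ent_mult:
  assumes d: "dim_col A = dim_row B" and "ent S A" "0 \<in> S" "ent {0,1} B" "col1 B"
  shows "ent S (A * B)"
  unfolding ent_def
proof (intro allI impI)
  fix i j assume i: "i < dim_row (A * B)" and j: "j < dim_col (A * B)"
  have e: "(A * B) $$ (i,j) = (\<Sum>k<dim_row B. A $$ (i,k) * B $$ (k,j))"
    by (rule mult_entry) (use d i j in auto)
  show "(A * B) $$ (i,j) \<in> S"
  proof (cases "\<exists>k<dim_row B. B $$ (k,j) \<noteq> 0")
    case False
    then have "(A * B) $$ (i,j) = 0" unfolding e by (intro sum.neutral) auto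
    then show ?thesis using assms by simp
  next
    case True
    then obtain k where k: "k < dim_row B" "B $$ (k,j) \<noteq> 0" by auto
    have B1: "B $$ (k,j) = 1" using k assms(4) j unfolding ent_def by auto
    have z: "\<forall>k'\<in>{..<dim_row B} - {k}. A $$ (i,k') * B $$ (k',j) = 0"
      using assms(5) k j unfolding col1_def by auto
    have s0: "(\<Sum>k'\<in>{..<dim_row B} - {k}. A $$ (i,k') * B $$ (k',j)) = 0"
      by (rule sum.neutral) (use z in auto)
    have "(\<Sum>k<dim_row B. A $$ (i,k) * B $$ (k,j)) = A $$ (i,k) * B $$ (k,j)
       + (\<Sum>k'\<in>{..<dim_row B} - {k}. A $$ (i,k') * B $$ (k',j))"
      using k by (subst sum.remove[of _ k]) auto
    then have "(\<Sum>k<dim_row B. A $$ (i,k) * B $$ (k,j)) = A $$ (i,k)" using s0 B1 by simp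
    then have "(A * B) $$ (i,j) = A $$ (i,k)" using e by simp
    then show ?thesis using assms(2) i k d unfolding ent_def by simp
  qed
qed

lemma col1_mult:
  assumes d: "dim_col A = dim_row B" and "col1 A" "col1 B"
  shows "col1 (A * B)"
  unfolding col1_def
proof (intro allI impI)
  fix j i1 i2 assume j: "j < dim_col (A * B)" and i1: "i1 < dim_row (A * B)" and i2: "i2 < dim_row (A * B)"
    and n1: "(A * B) $$ (i1, j) \<noteq> 0" and n2: "(A * B) $$ (i2, j) \<noteq> 0"
  have "(A * B) $$ (i1,j) = (\<Sum>k<dim_row B. A $$ (i1,k) * B $$ (k,j))" by (rule mult_entry) (use d i1 j in auto)
  then have "(\<Sum>k<dim_row B. A $$ (i1,k) * B $$ (k,j)) \<noteq> 0" using n1 by argo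
  then obtain k1 where "k1 \<in> {..<dim_row B}" "A $$ (i1,k1) * B $$ (k1,j) \<noteq> 0"
    by (rule sum.not_neutral_contains_not_neutral)
  then have k1: "k1 < dim_row B" "A $$ (i1,k1) \<noteq> 0" "B $$ (k1,j) \<noteq> 0" by auto
  have "(A * B) $$ (i2,j) = (\<Sum>k<dim_row B. A $$ (i2,k) * B $$ (k,j))" by (rule mult_entry) (use d i2 j in auto)
  then have "(\<Sum>k<dim_row B. A $$ (i2,k) * B $$ (k,j)) \<noteq> 0" using n2 by argo
  then obtain k2 where "k2 \<in> {..<dim_row B}" "A $$ (i2,k2) * B $$ (k2,j) \<noteq> 0"
    by (rule sum.not_neutral_contains_not_neutral)
  then have k2: "k2 < dim_row B" "A $$ (i2,k2) \<noteq> 0" "B $$ (k2,j) \<noteq> 0" by auto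
  have "k1 = k2" using assms(3) k1 k2 j unfolding col1_def by auto
  then show "i1 = i2" using assms(2) k1 k2 i1 i2 d unfolding col1_def by auto
qed


lemma stack_props:
  "(\<forall>M\<in>set Ms. dim_col M = nc \<and> ent S M) \<Longrightarrow> dim_col (stack Ms nc) = nc \<and> ent S (stack Ms nc)"
proof (induction Ms)
  case Nil
  then show ?case by (simp add: ent_def)
next
  case (Cons M Ms)
  then have IH: "dim_col (stack Ms nc) = nc" "ent S (stack Ms nc)" and M: "dim_col M = nc" "ent S M" by auto
  show ?case
  proof
    show "dim_col (stack (M # Ms) nc) = nc" using M by (simp add: append_rows_def)
    show "ent S (stack (M # Ms) nc)"
      unfolding ent_def
    proof (intro allI impI)
      fix i j assume i: "i < dim_row (stack (M # Ms) nc)" and j: "j < dim_col (stack (M # Ms) nc)"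
      then have i': "i < dim_row M + dim_row (stack Ms nc)" and j': "j < nc" using M by (auto simp: append_rows_def)
      show "stack (M # Ms) nc $$ (i, j) \<in> S"
      proof (cases "i < dim_row M")
        case True
        then show ?thesis using M i' j' unfolding ent_def by (simp add: append_rows_def)
      next
        case False
        then show ?thesis using M IH i' j' unfolding ent_def by (simp add: append_rows_def)
      qed
    qed
  qed
qed

lemma bdiag3_dims[simp]:
  "dim_row (bdiag3 X Y Z) = dim_row X + dim_row Y + dim_row Z"
  "dim_col (bdiag3 X Y Z) = dim_col X + dim_col Y + dim_col Z"
  by (auto simp: bdiag3_def)

lemma bdiag3_ent:
  assumes "ent S X" "ent S Y" "ent S Z" "0 \<in> S"
  shows "ent S (bdiag3 X Y Z)"
  using assms unfolding ent_def bdiag3_def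
  by (auto simp: index_mat_four_block)

lemma four_col1:
  assumes "col1 A" "col1 D"
  shows "col1 (four_block_mat A (0\<^sub>m (dim_row A) (dim_col D)) (0\<^sub>m (dim_row D) (dim_col A)) D)"
  unfolding col1_def
proof (intro allI impI)
  let ?F = "four_block_mat A (0\<^sub>m (dim_row A) (dim_col D)) (0\<^sub>m (dim_row D) (dim_col A)) D"
  fix j i1 i2 assume j: "j < dim_col ?F" and i1: "i1 < dim_row ?F" and i2: "i2 < dim_row ?F"
    and n1: "?F $$ (i1, j) \<noteq> 0" and n2: "?F $$ (i2, j) \<noteq> 0"
  have j': "j < dim_col A + dim_col D" and i1': "i1 < dim_row A + dim_row D" and i2': "i2 < dim_row A + dim_row D"
    using i1 i2 j by auto
  show "i1 = i2"
  proof (cases "j < dim_col A")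
    case True
    have a1: "i1 < dim_row A"
    proof (rule ccontr)
      assume "\<not> i1 < dim_row A"
      then have "?F $$ (i1, j) = 0" using True i1' j' by simp
      then show False using n1 by simp
    qed
    have a2: "i2 < dim_row A"
    proof (rule ccontr)
      assume "\<not> i2 < dim_row A"
      then have "?F $$ (i2, j) = 0" using True i2' j' by simp
      then show False using n2 by simp
    qed
    show ?thesis using assms(1) a1 a2 n1 n2 True i1' i2' j' unfolding col1_def by auto
  next
    case False
    have a1: "\<not> i1 < dim_row A"
    proof
      assume "i1 < dim_row A"
      then have "?F $$ (i1, j) = 0" using False i1' j' by simp
      then show False using n1 by simp
    qed
    have a2: "\<not> i2 < dim_row A"
    proof
      assume "i2 < dim_row A"
      then have "?F $$ (i2, j) = 0" using False i2' j' by simp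
      then show False using n2 by simp
    qed
    have "D $$ (i1 - dim_row A, j - dim_col A) \<noteq> 0" "D $$ (i2 - dim_row A, j - dim_col A) \<noteq> 0"
      using n1 n2 a1 a2 False i1' i2' j' by auto
    moreover have "i1 - dim_row A < dim_row D" "i2 - dim_row A < dim_row D" "j - dim_col A < dim_col D"
      using a1 a2 False i1' i2' j' by auto
    ultimately have "i1 - dim_row A = i2 - dim_row A" using assms(2) unfolding col1_def by blast
    then show ?thesis using a1 a2 by simp
  qed
qed

lemma bdiag3_col1:
  assumes "col1 X" "col1 Y" "col1 Z"
  shows "col1 (bdiag3 X Y Z)"
proof -
  have "col1 (four_block_mat Y (0\<^sub>m (dim_row Y) (dim_col Z)) (0\<^sub>m (dim_row Z) (dim_col Y)) Z)"
    by (rule four_col1) (use assms in auto)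
  then have "col1 (four_block_mat X
     (0\<^sub>m (dim_row X) (dim_col (four_block_mat Y (0\<^sub>m (dim_row Y) (dim_col Z)) (0\<^sub>m (dim_row Z) (dim_col Y)) Z)))
     (0\<^sub>m (dim_row (four_block_mat Y (0\<^sub>m (dim_row Y) (dim_col Z)) (0\<^sub>m (dim_row Z) (dim_col Y)) Z)) (dim_col X))
     (four_block_mat Y (0\<^sub>m (dim_row Y) (dim_col Z)) (0\<^sub>m (dim_row Z) (dim_col Y)) Z))"
    by (rule four_col1[OF assms(1)])
  then show ?thesis unfolding bdiag3_def by simp
qed

lemma row1_col1: "dim_row M = 1 \<Longrightarrow> col1 M"
  unfolding col1_def by auto

lemma kron_dims[simp]:
  "dim_row (kron X Y) = dim_row X * dim_row Y" "dim_col (kron X Y) = dim_col X * dim_col Y"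
  by (auto simp: kron_def)

lemma div_bound: "(i::nat) < a * b \<Longrightarrow> i div b < a"
  by (simp add: less_mult_imp_div_less)

lemma mod_bound: "(i::nat) < a * b \<Longrightarrow> i mod b < b"
  by (metis mod_less_divisor mult_zero_right not_less_zero zero_less_iff_neq_zero)

lemma kron_index:
  assumes "i < dim_row X * dim_row Y" "j < dim_col X * dim_col Y"
  shows "kron X Y $$ (i,j) = X $$ (i div dim_row Y, j div dim_col Y) * Y $$ (i mod dim_row Y, j mod dim_col Y)"
  using assms by (simp add: kron_def)

lemma kron_ent:
  assumes "ent {0,1} X" "ent {0,1} Y"
  shows "ent {0,1} (kron X Y)"
  unfolding ent_def
proof (intro allI impI)
  fix i j assume i: "i < dim_row (kron X Y)" and j: "j < dim_col (kron X Y)"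
  then have i': "i < dim_row X * dim_row Y" and j': "j < dim_col X * dim_col Y" by auto
  have "X $$ (i div dim_row Y, j div dim_col Y) \<in> {0,1}"
    using assms(1) div_bound[OF i'] div_bound[OF j'] unfolding ent_def by auto
  moreover have "Y $$ (i mod dim_row Y, j mod dim_col Y) \<in> {0,1}"
    using assms(2) mod_bound[OF i'] mod_bound[OF j'] unfolding ent_def by auto
  ultimately show "kron X Y $$ (i, j) \<in> {0,1}" using kron_index[OF i' j'] by auto
qed

lemma kronQ_col1:
  assumes "length ch = 3" "distinct (map fst ch)"
  shows "col1 (kron (Qmat N ch) (1\<^sub>m M))"
  unfolding col1_def
proof (intro allI impI)
  fix j i1 i2 assume j: "j < dim_col (kron (Qmat N ch) (1\<^sub>m M))"
    and i1: "i1 < dim_row (kron (Qmat N ch) (1\<^sub>m M))" and i2: "i2 < dim_row (kron (Qmat N ch) (1\<^sub>m M))"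
    and n1: "kron (Qmat N ch) (1\<^sub>m M) $$ (i1, j) \<noteq> 0" and n2: "kron (Qmat N ch) (1\<^sub>m M) $$ (i2, j) \<noteq> 0"
  have j': "j < N * M" and i1': "i1 < 3 * M" and i2': "i2 < 3 * M" using j i1 i2 by (auto simp: Qmat_def)
  have d1: "i1 div M < 3" "j div M < N" "i1 mod M < M" "j mod M < M"
    using div_bound[OF i1'] div_bound[OF j'] mod_bound[OF i1'] mod_bound[OF j'] by auto
  have d2: "i2 div M < 3" "i2 mod M < M"
    using div_bound[OF i2'] mod_bound[OF i2'] by auto
  have e1: "j div M = fst (ch ! (i1 div M)) \<and> i1 mod M = j mod M"
    using n1 kron_index[of i1 "Qmat N ch" "1\<^sub>m M" j] i1' j' d1 by (auto simp: Qmat_def split: if_splits)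
  have e2: "j div M = fst (ch ! (i2 div M)) \<and> i2 mod M = j mod M"
    using n2 kron_index[of i2 "Qmat N ch" "1\<^sub>m M" j] i2' j' d1 d2 by (auto simp: Qmat_def split: if_splits)
  have "map fst ch ! (i1 div M) = map fst ch ! (i2 div M)" using e1 e2 d1 d2 assms(1) by simp
  then have "i1 div M = i2 div M" using nth_eq_iff_index_eq[OF assms(2), of "i1 div M" "i2 div M"] assms(1) d1 d2 by simp
  then show "i1 = i2" using e1 e2 by (metis div_mult_mod_eq)
qed

lemma Dmat_ent: "ent {0,1} (Dmat q enc h)"
  unfolding ent_def Dmat_def by auto

lemma Dmat_col1: "col1 (Dmat q enc h)"
  unfolding col1_def Dmat_def by (auto split: if_splits)

lemma beta_ent: "ent {0,1} (beta_row q l)"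
  unfolding ent_def beta_row_def
proof (intro allI impI)
  fix i j assume "i < dim_row (mat 1 (2 ^ q - 1) (\<lambda>(_, c). (\<Sum>i<q. Bmat q $$ (i, l - 1) * Bmat q $$ (i, c)) mod 2))"
    "j < dim_col (mat 1 (2 ^ q - 1) (\<lambda>(_, c). (\<Sum>i<q. Bmat q $$ (i, l - 1) * Bmat q $$ (i, c)) mod 2))"
  moreover have "\<And>x::int. x mod 2 \<in> {0,1}" by auto
  ultimately show "mat 1 (2 ^ q - 1) (\<lambda>(_, c). (\<Sum>i<q. Bmat q $$ (i, l - 1) * Bmat q $$ (i, c)) mod 2) $$ (i, j) \<in> {0, 1}"
    by simp
qed

lemma beta_dims[simp]: "dim_row (beta_row q l) = 1" "dim_col (beta_row q l) = 2^q - 1"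
  by (auto simp: beta_row_def)

lemma Dmat_dims[simp]: "dim_row (Dmat q enc h) = 2^q - 1" "dim_col (Dmat q enc h) = 2^q - 1"
  by (auto simp: Dmat_def)

lemma Pmat_ent: "ent {0,1,-1} Pmat"
  unfolding ent_def
proof (intro allI impI)
  fix i j assume i: "i < dim_row Pmat" and j: "j < dim_col Pmat"
  then have "i < 4" "j < 3" by (auto simp: Pmat_def mat_of_rows_list_def)
  then have "i = 0 \<or> i = 1 \<or> i = 2 \<or> i = 3" "j = 0 \<or> j = 1 \<or> j = 2" by auto
  then show "Pmat $$ (i, j) \<in> {0, 1, - 1}" by (auto simp: Pmat_def mat_of_rows_list_def)
qed

lemma Pmat_dims[simp]: "dim_col Pmat = 3" "dim_row Pmat = 4"
  by (auto simp: Pmat_def mat_of_rows_list_def)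


lemma ent_mono: "ent S M \<Longrightarrow> S \<subseteq> T \<Longrightarrow> ent T M"
  unfolding ent_def by blast

lemma nz_pos_props:
  shows "distinct (nz_pos H j)" "\<And>k. k < length (nz_pos H j) \<Longrightarrow> nz_pos H j ! k < dim_col H"
proof -
  have fin: "finite {k. k < dim_col H \<and> H $$ (j, k) \<noteq> 0}" by simp
  show "distinct (nz_pos H j)" unfolding nz_pos_def by simp
  fix k assume "k < length (nz_pos H j)"
  then have "nz_pos H j ! k \<in> set (nz_pos H j)" by simp
  then show "nz_pos H j ! k < dim_col H" unfolding nz_pos_def using fin by simp
qed

lemma row_checks_ok:
  assumes d3: "3 \<le> row_deg H j" and ch: "ch \<in> set (row_checks H j base)"
  shows "length ch = 3 \<and> distinct (map fst ch)"
proof -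
  define s where "s = nz_pos H j"
  define d where "d = length s"
  define n where "n = dim_col H"
  have ds: "distinct s" and sb: "\<And>k. k < d \<Longrightarrow> s ! k < n"
    using nz_pos_props[where H=H and j=j] unfolding s_def d_def n_def by auto
  have dd: "3 \<le> d" using d3 unfolding d_def s_def row_deg_def by simp
  have sne: "\<And>a b. a < d \<Longrightarrow> b < d \<Longrightarrow> a \<noteq> b \<Longrightarrow> s ! a \<noteq> s ! b"
    using ds unfolding d_def by (simp add: nth_eq_iff_index_eq)
  have rc: "row_checks H j base =
    (if d = 3 then [[(s!0, H $$ (j, s!0)), (s!1, H $$ (j, s!1)), (s!2, H $$ (j, s!2))]]
     else [[(s!0, H $$ (j, s!0)), (s!1, H $$ (j, s!1)), (n + base + (1 - 1), 1)]]
       @ map (\<lambda>t. [(n + base + (t - 1 - 1), 1), (s!t, H $$ (j, s!t)), (n + base + (t - 1), 1)]) [2..<d - 2]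
       @ [[(n + base + (d - 3 - 1), 1), (s!(d-2), H $$ (j, s!(d-2))), (s!(d-1), H $$ (j, s!(d-1)))]])"
    unfolding row_checks_def s_def d_def n_def Let_def by simp
  show ?thesis
  proof (cases "d = 3")
    case True
    then have "ch = [(s!0, H $$ (j, s!0)), (s!1, H $$ (j, s!1)), (s!2, H $$ (j, s!2))]"
      using ch rc by simp
    moreover have "s!0 \<noteq> s!1" "s!0 \<noteq> s!2" "s!1 \<noteq> s!2" using sne True by auto
    ultimately show ?thesis by simp
  next
    case False
    then have d4: "4 \<le> d" using dd by simp
    from ch False rc consider
      (a) "ch = [(s!0, H $$ (j, s!0)), (s!1, H $$ (j, s!1)), (n + base + (1 - 1), 1)]"
    | (b) t where "t \<in> {2..<d-2}" "ch = [(n + base + (t - 1 - 1), 1), (s!t, H $$ (j, s!t)), (n + base + (t - 1), 1)]"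
    | (c) "ch = [(n + base + (d - 3 - 1), 1), (s!(d-2), H $$ (j, s!(d-2))), (s!(d-1), H $$ (j, s!(d-1)))]"
      by auto
    then show ?thesis
    proof cases
      case a
      have "s!0 \<noteq> s!1" using sne d4 by auto
      moreover have "s!0 < n" "s!1 < n" using sb d4 by auto
      ultimately show ?thesis using a by auto
    next
      case (b t)
      have "s!t < n" using sb b(1) by auto
      then show ?thesis using b by auto
    next
      case c
      have "s!(d-2) \<noteq> s!(d-1)" using sne d4 by auto
      moreover have "s!(d-2) < n" "s!(d-1) < n" using sb d4 by auto
      ultimately show ?thesis using c by auto
    qed
  qed
qed

lemma all_checks_ok:
  assumes "\<And>j. j < dim_row H \<Longrightarrow> row_deg H j \<ge> 3" and "ch \<in> set (all_checks H)"
  shows "length ch = 3 \<and> distinct (map fst ch)"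
proof -
  obtain j where "j < dim_row H" "ch \<in> set (row_checks H j (aux_base H j))"
    using assms(2) unfolding all_checks_def by auto
  then show ?thesis using row_checks_ok assms(1) by blast
qed

lemma block_ok:
  assumes "length ch = 3" "distinct (map fst ch)"
  shows "dim_col (What q enc ch * kron (Qmat N ch) (1\<^sub>m (2^q - 1))) = N * (2^q - 1)
    \<and> ent {0,1,-1} (What q enc ch * kron (Qmat N ch) (1\<^sub>m (2^q - 1)))"
proof -
  let ?M = "2^q - 1 :: nat"
  have blk: "dim_col (Pmat * bdiag3 (beta_row q l) (beta_row q l) (beta_row q l) * Dtau q enc ch) = 3 * ?M
      \<and> ent {0,1,-1} (Pmat * bdiag3 (beta_row q l) (beta_row q l) (beta_row q l) * Dtau q enc ch)" for l
  proof
    show "dim_col (Pmat * bdiag3 (beta_row q l) (beta_row q l) (beta_row q l) * Dtau q enc ch) = 3 * ?M"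
      by (simp add: Dtau_def)
    have e1: "ent {0,1,-1} (Pmat * bdiag3 (beta_row q l) (beta_row q l) (beta_row q l))"
    proof (rule ent_mult)
      show "col1 (bdiag3 (beta_row q l) (beta_row q l) (beta_row q l))"
        by (intro bdiag3_col1 row1_col1) simp_all
      show "ent {0,1} (bdiag3 (beta_row q l) (beta_row q l) (beta_row q l))"
        by (intro bdiag3_ent beta_ent) simp
    qed (auto intro: Pmat_ent)
    show "ent {0,1,-1} (Pmat * bdiag3 (beta_row q l) (beta_row q l) (beta_row q l) * Dtau q enc ch)"
      by (rule ent_mult[OF _ e1]) (auto simp: Dtau_def intro!: bdiag3_ent Dmat_ent bdiag3_col1 Dmat_col1)
  qed
  have W: "dim_col (What q enc ch) = 3 * ?M \<and> ent {0,1,-1} (What q enc ch)"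
    unfolding What_def by (rule stack_props) (use blk in auto)
  have "ent {0,1,-1} (What q enc ch * kron (Qmat N ch) (1\<^sub>m ?M))"
  proof (rule ent_mult)
    show "dim_col (What q enc ch) = dim_row (kron (Qmat N ch) (1\<^sub>m ?M))" using W by (simp add: Qmat_def)
    show "ent {0,1,-1} (What q enc ch)" using W by simp
    show "ent {0,1} (kron (Qmat N ch) (1\<^sub>m ?M))"
      by (rule kron_ent) (auto simp: ent_def Qmat_def)
    show "col1 (kron (Qmat N ch) (1\<^sub>m ?M))" by (rule kronQ_col1[OF assms])
  qed simp
  then show ?thesis by (simp add: Qmat_def)
qed

theorem fact1:
  fixes q :: nat and enc :: "'f::field \<Rightarrow> nat" and H :: "'f mat"
  assumes "q \<ge> 1"
    and "card (UNIV :: 'f set) = 2 ^ q"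
    and "bij_betw enc UNIV {0..<2 ^ q}"
    and "\<And>a b. enc (a + b) = xor (enc a) (enc b)"
    and "\<And>j. j < dim_row H \<Longrightarrow> row_deg H j \<ge> 3"
  shows "elements_mat (Amat q enc H) \<subseteq> {0, 1, -1}"
proof -
  let ?N = "num_syms H"
  let ?M = "2^q - 1 :: nat"
  have S: "dim_col (Smat q ?N) = ?N * ?M \<and> ent {0,1,-1} (Smat q ?N)"
  proof
    show "dim_col (Smat q ?N) = ?N * ?M" by (simp add: Smat_def)
    have "ent {0,1} (Smat q ?N)" unfolding Smat_def by (rule kron_ent) (auto simp: ent_def)
    then show "ent {0,1,-1} (Smat q ?N)" by (rule ent_mono) auto
  qed
  have "dim_col (Amat q enc H) = ?N * ?M \<and> ent {0,1,-1} (Amat q enc H)"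
    unfolding Amat_def Let_def
  proof (rule stack_props, intro ballI)
    fix X assume "X \<in> set (map (\<lambda>ch. What q enc ch * kron (Qmat ?N ch) (1\<^sub>m ?M)) (all_checks H) @ [Smat q ?N])"
    then consider (a) ch where "ch \<in> set (all_checks H)" "X = What q enc ch * kron (Qmat ?N ch) (1\<^sub>m ?M)"
      | (b) "X = Smat q ?N" by auto
    then show "dim_col X = ?N * ?M \<and> ent {0,1,-1} X"
    proof cases
      case (a ch)
      then show ?thesis using block_ok all_checks_ok[OF assms(5)] by blast
    next
      case b
      then show ?thesis using S by simp
    qed
  qed
  then have "ent {0,1,-1} (Amat q enc H)" by simp
  then show ?thesis unfolding ent_def by (auto dest!: elements_matD)
qed

end
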